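(* Let $\mathbb{H}$ be a reproducing kernel Hilbert space with inner product $\langle\cdot,\cdot\rangle$ and feature map $\phi$, and let $(X,A,Y)$ be jointly distributed with $Y=\langle\phi(X),y\rangle$ and $A=\langle\phi(X),a\rangle$ for some nonzero $y,a\in\mathbb{H}$, with $\operatorname{Var}(Y),\operatorname{Var}(A)>0$. Then for every (possibly randomized) representation $Z=g(X)$ with $\operatorname{Var}\mathbb{E}[A\mid Z]=0$, $$\operatorname{Var}\mathbb{E}[Y\mid Z]\le \operatorname{Var}(Y)-\frac{\operatorname{Cov}(A,Y)^2}{\operatorname{Var}(A)}=\operatorname{Var}(Y)(1-\rho_{YA}^2),$$ where $\rho_{YA}$ is the correlation coefficient of $Y$ and $A$.
   Context: A (possibly randomized) representation is $Z=g(X,S)$ for a measurable $g$ and auxiliary randomness $S$ independent of $(X,A,Y)$. $\phi(X)$ is assumed to have finite second moment in $\mathbb{H}$. *)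

theory Defs
  imports "HOL-Probability.Probability"
begin

definition covariance :: "'a measure \<Rightarrow> ('a \<Rightarrow> real) \<Rightarrow> ('a \<Rightarrow> real) \<Rightarrow> real" where
  "covariance M f g =
     (\<integral>\<omega>. (f \<omega> - (\<integral>x. f x \<partial>M)) * (g \<omega> - (\<integral>x. g x \<partial>M)) \<partial>M)"

definition correlation :: "'a measure \<Rightarrow> ('a \<Rightarrow> real) \<Rightarrow> ('a \<Rightarrow> real) \<Rightarrow> real" where
  "correlation M f g =
     covariance M f g / sqrt (prob_space.variance M f * prob_space.variance M g)"

definition cond_exp_given :: "'a measure \<Rightarrow> ('a \<Rightarrow> 'z) \<Rightarrow> 'z measure \<Rightarrow> ('a \<Rightarrow> real) \<Rightarrow> 'a \<Rightarrow> real" where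
  "cond_exp_given M Z N f = real_cond_exp M (vimage_algebra (space M) Z N) f"

end

theory Submission
  imports Defs
begin

lemma subalg_vimage:
  assumes "Z \<in> measurable M N"
  shows "subalgebra M (vimage_algebra (space M) Z N)"
  unfolding subalgebra_def using assms
  by (auto simp: sets_vimage_algebra2 measurable_sets measurable_space)

lemma var_cond_le:
  assumes P: "prob_space M" and sub: "subalgebra M F"
    and R: "integrable M R" and R2: "integrable M (\<lambda>x. (R x)\<^sup>2)"
  shows "prob_space.variance M (real_cond_exp M F R) \<le> prob_space.variance M R"
proof -
  interpret prob_space M by (rule P)
  interpret finite_measure_subalgebra M F
    by unfold_locales (rule sub)
  let ?C = "real_cond_exp M F R"
  have iC: "integrable M ?C" using R by blast
  have eC: "expectation ?C = expectation R" using R by blast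
  have iC2: "integrable M (\<lambda>x. (?C x)\<^sup>2)"
    by (rule integrable_convex_cond_exp[where I=UNIV and q=power2])
       (auto simp: R R2 convex_power2)
  have J: "AE x in M. (?C x)\<^sup>2 \<le> real_cond_exp M F (\<lambda>x. (R x)\<^sup>2) x"
    by (rule real_cond_exp_jensens_inequality(2)[where I=UNIV and q=power2])
       (auto simp: R R2 convex_power2)
  have "expectation (\<lambda>x. (?C x)\<^sup>2) \<le> expectation (real_cond_exp M F (\<lambda>x. (R x)\<^sup>2))"
    by (rule integral_mono_AE[OF iC2 _ J]) (use R2 in blast)
  also have "\<dots> = expectation (\<lambda>x. (R x)\<^sup>2)" using R2 by blast
  finally have "expectation (\<lambda>x. (?C x)\<^sup>2) \<le> expectation (\<lambda>x. (R x)\<^sup>2)" .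
  then show ?thesis
    using variance_eq[OF iC iC2] variance_eq[OF R R2] eC by simp
qed

lemma abs_le_sq: "\<bar>u * v\<bar> \<le> (u::real)\<^sup>2 + v\<^sup>2"
proof -
  have "0 \<le> (\<bar>u\<bar> - \<bar>v\<bar>)\<^sup>2" by simp
  then have "2 * (\<bar>u\<bar> * \<bar>v\<bar>) \<le> \<bar>u\<bar>\<^sup>2 + \<bar>v\<bar>\<^sup>2" by (simp add: power2_diff)
  moreover have "0 \<le> \<bar>u\<bar> * \<bar>v\<bar>" by simp
  ultimately show ?thesis unfolding abs_mult power2_abs by linarith
qed
lemma abs_le_1sq: "\<bar>w\<bar> \<le> 1 + (w::real)\<^sup>2"
  using abs_le_sq[of w 1] by simp

lemma sq_prod_integrable:
  fixes f g :: "'a \<Rightarrow> real"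
  assumes "integrable M (\<lambda>x. (f x)\<^sup>2)" "integrable M (\<lambda>x. (g x)\<^sup>2)"
    and [measurable]: "f \<in> borel_measurable M" "g \<in> borel_measurable M"
  shows "integrable M (\<lambda>x. f x * g x)"
proof (rule Bochner_Integration.integrable_bound[where f="\<lambda>x. (f x)\<^sup>2 + (g x)\<^sup>2"])
  show "integrable M (\<lambda>x. (f x)\<^sup>2 + (g x)\<^sup>2)" using assms by auto
  show "AE x in M. norm (f x * g x) \<le> norm ((f x)\<^sup>2 + (g x)\<^sup>2)"
    using abs_le_sq by auto
qed simp

lemma sq_shift_integrable:
  fixes f :: "'a \<Rightarrow> real"
  assumes "finite_measure M" "integrable M (\<lambda>x. (f x)\<^sup>2)" "integrable M f"
  shows "integrable M (\<lambda>x. (f x - c)\<^sup>2)"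
proof -
  interpret finite_measure M by fact
  have "(\<lambda>x. (f x - c)\<^sup>2) = (\<lambda>x. (f x)\<^sup>2 - (2 * c) * f x + c\<^sup>2)"
    by (auto simp: power2_diff)
  then show ?thesis using assms by auto
qed

theorem theorem3:
  fixes M :: "'\<omega> measure"
    and NX :: "'x measure" and NS :: "'s measure" and NZ :: "'z measure"
    and \<phi> :: "'x \<Rightarrow> 'h :: {real_inner, complete_space}"
    and X :: "'\<omega> \<Rightarrow> 'x" and S :: "'\<omega> \<Rightarrow> 's"
    and g :: "'x \<times> 's \<Rightarrow> 'z"
    and y a :: 'h
    and Y A :: "'\<omega> \<Rightarrow> real"
  assumes prob: "prob_space M"
    and X_meas: "X \<in> measurable M NX"
    and phi_meas: "\<phi> \<in> borel_measurable NX"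
    and second_moment: "integrable M (\<lambda>\<omega>. (norm (\<phi> (X \<omega>)))\<^sup>2)"
    and Y_def: "\<And>\<omega>. Y \<omega> = inner (\<phi> (X \<omega>)) y"
    and A_def: "\<And>\<omega>. A \<omega> = inner (\<phi> (X \<omega>)) a"
    and y_nz: "y \<noteq> 0" and a_nz: "a \<noteq> 0"
    and varY: "prob_space.variance M Y > 0"
    and varA: "prob_space.variance M A > 0"
    and S_meas: "S \<in> measurable M NS"
    and S_indep: "prob_space.indep_set M
                    (sets (vimage_algebra (space M) S NS))
                    (sets (vimage_algebra (space M) (\<lambda>\<omega>. (X \<omega>, A \<omega>, Y \<omega>))
                       (NX \<Otimes>\<^sub>M (borel :: real measure) \<Otimes>\<^sub>M (borel :: real measure))))"
    and g_meas: "g \<in> measurable (NX \<Otimes>\<^sub>M NS) NZ"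
    and fair: "prob_space.variance M
                 (cond_exp_given M (\<lambda>\<omega>. g (X \<omega>, S \<omega>)) NZ A) = 0"
  shows "prob_space.variance M (cond_exp_given M (\<lambda>\<omega>. g (X \<omega>, S \<omega>)) NZ Y)
           \<le> prob_space.variance M Y - (covariance M A Y)\<^sup>2 / prob_space.variance M A
       \<and> prob_space.variance M Y - (covariance M A Y)\<^sup>2 / prob_space.variance M A
           = prob_space.variance M Y * (1 - (correlation M Y A)\<^sup>2)"
proof -
  interpret prob_space M by (rule prob)
  define Z where "Z = (\<lambda>\<omega>. g (X \<omega>, S \<omega>))"
  define F where "F = vimage_algebra (space M) Z NZ"
  have Zm: "Z \<in> measurable M NZ"
    unfolding Z_def using g_meas X_meas S_meas by measurable
  have sub: "subalgebra M F" unfolding F_def by (rule subalg_vimage[OF Zm])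
  interpret finite_measure_subalgebra M F by unfold_locales (rule sub)
  have PXm: "(\<lambda>\<omega>. \<phi> (X \<omega>)) \<in> borel_measurable M"
    using phi_meas X_meas by measurable
  have Ym[measurable]: "Y \<in> borel_measurable M"
  proof -
    have "(\<lambda>u::'h. inner u y) \<in> borel_measurable borel"
      by (intro borel_measurable_continuous_onI continuous_intros)
    from measurable_compose[OF PXm this] show ?thesis unfolding Y_def[abs_def] .
  qed
  have Am[measurable]: "A \<in> borel_measurable M"
  proof -
    have "(\<lambda>u::'h. inner u a) \<in> borel_measurable borel"
      by (intro borel_measurable_continuous_onI continuous_intros)
    from measurable_compose[OF PXm this] show ?thesis unfolding A_def[abs_def] .
  qed
  have sqi: "integrable M (\<lambda>\<omega>. (W \<omega>)\<^sup>2)" "integrable M W"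
    if W: "\<And>\<omega>. W \<omega> = inner (\<phi> (X \<omega>)) v" and Wm: "W \<in> borel_measurable M" for W v
  proof -
    have b: "\<bar>W \<omega>\<bar> \<le> norm (\<phi> (X \<omega>)) * norm v" for \<omega>
      unfolding W by (rule Cauchy_Schwarz_ineq2)
    have b2: "(W \<omega>)\<^sup>2 \<le> (norm v)\<^sup>2 * (norm (\<phi> (X \<omega>)))\<^sup>2" for \<omega>
    proof -
      have "(W \<omega>)\<^sup>2 = \<bar>W \<omega>\<bar>\<^sup>2" by simp
      also have "\<dots> \<le> (norm (\<phi> (X \<omega>)) * norm v)\<^sup>2"
        using b[of \<omega>] by (intro power_mono) auto
      finally show ?thesis by (simp add: power_mult_distrib mult.commute)
    qed
    show i2: "integrable M (\<lambda>\<omega>. (W \<omega>)\<^sup>2)"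
      by (rule Bochner_Integration.integrable_bound[where f="\<lambda>\<omega>. (norm v)\<^sup>2 * (norm (\<phi> (X \<omega>)))\<^sup>2"])
         (use second_moment Wm b2 in auto)
    have b1: "\<bar>W \<omega>\<bar> \<le> 1 + (W \<omega>)\<^sup>2" for \<omega>
      by (rule abs_le_1sq)
    show "integrable M W"
      by (rule Bochner_Integration.integrable_bound[where f="\<lambda>\<omega>. 1 + (W \<omega>)\<^sup>2"])
         (use i2 Wm b1 in auto)
  qed
  have Y2: "integrable M (\<lambda>\<omega>. (Y \<omega>)\<^sup>2)" and Yi: "integrable M Y"
    using sqi[OF Y_def Ym] by auto
  have A2: "integrable M (\<lambda>\<omega>. (A \<omega>)\<^sup>2)" and Ai: "integrable M A"
    using sqi[OF A_def Am] by auto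
  define mY where "mY = expectation Y"
  define mA where "mA = expectation A"
  define VY where "VY = variance Y"
  define VA where "VA = variance A"
  define C where "C = covariance M A Y"
  define \<beta> where "\<beta> = C / VA"
  define R where "R = (\<lambda>\<omega>. Y \<omega> - \<beta> * A \<omega>)"
  have Rm[measurable]: "R \<in> borel_measurable M" unfolding R_def by measurable
  have AYi: "integrable M (\<lambda>\<omega>. A \<omega> * Y \<omega>)"
    by (rule sq_prod_integrable[OF A2 Y2 Am Ym])
  have Ri: "integrable M R" unfolding R_def using Yi Ai by auto
  have R2: "integrable M (\<lambda>\<omega>. (R \<omega>)\<^sup>2)"
  proof -
    have "(\<lambda>\<omega>. (R \<omega>)\<^sup>2) = (\<lambda>\<omega>. (Y \<omega>)\<^sup>2 + (-2*\<beta>) * (A \<omega> * Y \<omega>) + \<beta>\<^sup>2 * (A \<omega>)\<^sup>2)"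
      by (auto simp: R_def power2_eq_square algebra_simps)
    then show ?thesis using Y2 A2 AYi
      by (auto intro!: Bochner_Integration.integrable_add Bochner_Integration.integrable_mult_right)
  qed
  have ceq: "cond_exp_given M (\<lambda>\<omega>. g (X \<omega>, S \<omega>)) NZ W = real_cond_exp M F W" for W
    by (simp add: cond_exp_given_def F_def Z_def)
  define CY where "CY = real_cond_exp M F Y"
  define CA where "CA = real_cond_exp M F A"
  define CR where "CR = real_cond_exp M F R"
  have CAi: "integrable M CA" and eCA: "expectation CA = mA"
    using Ai unfolding CA_def mA_def by auto
  have CYi: "integrable M CY" and eCY: "expectation CY = mY"
    using Yi unfolding CY_def mY_def by auto
  have CRi: "integrable M CR" and eCR: "expectation CR = expectation R"
    using Ri unfolding CR_def by auto
  have eR: "expectation R = mY - \<beta> * mA"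
    unfolding R_def mY_def mA_def using Yi Ai by simp
  have CA2: "integrable M (\<lambda>x. (CA x)\<^sup>2)" unfolding CA_def
    by (rule integrable_convex_cond_exp[where I=UNIV and q=power2])
       (auto simp: Ai A2 convex_power2)
  have CAs: "integrable M (\<lambda>x. (CA x - mA)\<^sup>2)"
    by (rule sq_shift_integrable[OF _ CA2 CAi]) unfold_locales
  have "variance CA = 0" using fair unfolding ceq CA_def .
  then have "(\<integral>x. (CA x - mA)\<^sup>2 \<partial>M) = 0" using eCA by simp
  then have "AE x in M. (CA x - mA)\<^sup>2 = 0"
    using integral_nonneg_eq_0_iff_AE[OF CAs] by auto
  then have CAc: "AE x in M. CA x = mA" by auto
  have d1: "AE x in M. CR x = CY x - real_cond_exp M F (\<lambda>\<omega>. \<beta> * A \<omega>) x"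
    unfolding CR_def CY_def R_def using Yi Ai by (intro real_cond_exp_diff) auto
  have d2: "AE x in M. real_cond_exp M F (\<lambda>\<omega>. \<beta> * A \<omega>) x = \<beta> * CA x"
    unfolding CA_def using Ai by (rule real_cond_exp_cmult)
  have AEe: "AE x in M. (CY x - expectation CY)\<^sup>2 = (CR x - expectation CR)\<^sup>2"
    using d1 d2 CAc by eventually_elim (simp add: eCY eCR eR)
  have "variance CY = variance CR"
    by (rule integral_cong_AE) (use AEe CYi CRi in auto)
  also have "\<dots> \<le> variance R" unfolding CR_def
    by (rule var_cond_le[OF prob sub Ri R2])
  also have "variance R = VY - C\<^sup>2 / VA"
  proof -
    define a' where "a' = (\<lambda>x. A x - mA)"
    define y' where "y' = (\<lambda>x. Y x - mY)"
    have a2: "integrable M (\<lambda>x. (a' x)\<^sup>2)" unfolding a'_def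
      by (rule sq_shift_integrable[OF _ A2 Ai]) unfold_locales
    have y2: "integrable M (\<lambda>x. (y' x)\<^sup>2)" unfolding y'_def
      by (rule sq_shift_integrable[OF _ Y2 Yi]) unfold_locales
    have ay: "integrable M (\<lambda>x. a' x * y' x)"
      by (rule sq_prod_integrable[OF a2 y2]) (auto simp: a'_def y'_def)
    have pt: "(R x - expectation R)\<^sup>2 = (y' x)\<^sup>2 + (- 2 * \<beta>) * (a' x * y' x) + \<beta>\<^sup>2 * (a' x)\<^sup>2" for x
    proof -
      have e: "R x - expectation R = y' x - \<beta> * a' x"
        by (simp only: eR) (simp add: R_def a'_def y'_def algebra_simps)
      show ?thesis unfolding e by (simp add: power2_eq_square algebra_simps)
    qed
    have "variance R = (\<integral>x. (y' x)\<^sup>2 + (- 2 * \<beta>) * (a' x * y' x) + \<beta>\<^sup>2 * (a' x)\<^sup>2 \<partial>M)"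
      by (simp only: pt)
    also have "\<dots> = (\<integral>x. (y' x)\<^sup>2 \<partial>M) + (- 2 * \<beta>) * (\<integral>x. a' x * y' x \<partial>M) + \<beta>\<^sup>2 * (\<integral>x. (a' x)\<^sup>2 \<partial>M)"
      using a2 y2 ay by simp
    also have "\<dots> = VY + (- 2 * \<beta>) * C + \<beta>\<^sup>2 * VA"
      unfolding VY_def VA_def C_def covariance_def a'_def y'_def mA_def mY_def by simp
    also have "\<dots> = VY - C\<^sup>2 / VA"
      using varA unfolding \<beta>_def VA_def[symmetric] by (simp add: field_simps power2_eq_square)
    finally show ?thesis .
  qed
  finally have part1: "variance CY \<le> VY - C\<^sup>2 / VA" .
  have cYA: "covariance M Y A = C" unfolding C_def covariance_def by (simp add: mult.commute)
  have corr: "(correlation M Y A)\<^sup>2 = C\<^sup>2 / (VY * VA)"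
    unfolding correlation_def cYA VY_def[symmetric] VA_def[symmetric]
    using varY varA unfolding VY_def[symmetric] VA_def[symmetric]
    by (simp add: power_divide)
  have part2: "VY - C\<^sup>2 / VA = VY * (1 - (correlation M Y A)\<^sup>2)"
    unfolding corr using varY varA unfolding VY_def[symmetric] VA_def[symmetric]
    by (simp add: field_simps)
  show ?thesis using part1 part2
    unfolding ceq CY_def[symmetric] VY_def VA_def C_def by simp
qed

end
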